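(* Let $p=(p_k)_{k\in\mathbb{N}}$ be a probability mass function with $p_k=0$ for all odd $k$, let $c\in(0,1)$, and let $(\tilde G^{(p)}_n)_{n\ge n_p}$ be the connected unions of circulant regular graphs described below, with $\phi_n$ a uniformly chosen vertex. Then (a) $\lim_{n\to\infty}\mathbb{P}(d_{\phi_n}=k)=p_k$ for every $k$; in particular, if $p$ is a power law, then $d_{\phi_n}$ converges in distribution to a power law with the same tail index; (b) $R^{(\tilde G^{(p)}_n)}_{\phi_n}\to1$ in probability as $n\to\infty$.
   Context: For even $k\ge2$ and $N>k$, $G_{k,N}$ has vertex set $\mathbb{Z}/N\mathbb{Z}$ with $i$ adjacent to $i\pm1,\dots,i\pm k/2$. Let $N_{k,n}=\lfloor np_k\rfloor$, let $(M_n)$ diverge to infinity slowly enough that $N_{k,n}\ge k+1$ for all even $k\in[M_n]$ with $p_k>0$, and $n_p=\min\{n:M_n\ge2\}$. For $n\ge n_p$, $G^{(p)}_n$ is the disjoint union of $G_{k,N_{k,n}}$ over even $k\in[M_n]$ with $p_k>0$, and $\tilde G^{(p)}_n$ is obtained by adding, for each pair of components with consecutive degrees, one edge between a vertex of each, making the graph connected. PageRank with damping factor $c$: $p_{ij}=a_{ij}/d_i$ and $\boldsymbol{R}$ uniquely solves $\boldsymbol{R}=c\boldsymbol{R}\boldsymbol{P}+(1-c)\boldsymbol{1}$. A random variable has a power-law distribution with exponent $\tau>1$ (tail index $\tau-1$) if $\mathbb{P}(X>x)=\mathcal{L}(x)x^{-(\tau-1)}$ with $\mathcal{L}$ slowly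 varying at infinity. *)

theory Defs
  imports "HOL-Analysis.Analysis"
begin

definition circ_adj :: "nat \<Rightarrow> nat \<Rightarrow> nat \<Rightarrow> nat \<Rightarrow> bool" where
  "circ_adj k N i j \<longleftrightarrow> i < N \<and> j < N \<and> i \<noteq> j \<and>
     (let d = (int i - int j) mod int N in
        (1 \<le> d \<and> d \<le> int (k div 2)) \<or> (int N - int (k div 2) \<le> d \<and> d \<le> int N - 1))"

definition Nkn :: "(nat \<Rightarrow> real) \<Rightarrow> nat \<Rightarrow> nat \<Rightarrow> nat" where
  "Nkn p k n = nat \<lfloor>real n * p k\<rfloor>"

definition Dset :: "(nat \<Rightarrow> real) \<Rightarrow> (nat \<Rightarrow> nat) \<Rightarrow> nat \<Rightarrow> nat set" where
  "Dset p M n = {k. even k \<and> 1 \<le> k \<and> k \<le> M n \<and> p k > 0}"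

text \<open>Vertex set of G^(p)_n: pairs (k,i), i a vertex of the component G_{k,N_{k,n}}.\<close>
definition Vset :: "(nat \<Rightarrow> real) \<Rightarrow> (nat \<Rightarrow> nat) \<Rightarrow> nat \<Rightarrow> (nat \<times> nat) set" where
  "Vset p M n = {(k, i). k \<in> Dset p M n \<and> i < Nkn p k n}"

definition G_adj :: "(nat \<Rightarrow> real) \<Rightarrow> (nat \<Rightarrow> nat) \<Rightarrow> nat \<Rightarrow> nat \<times> nat \<Rightarrow> nat \<times> nat \<Rightarrow> bool" where
  "G_adj p M n u v \<longleftrightarrow> u \<in> Vset p M n \<and> v \<in> Vset p M n \<and>
     fst u = fst v \<and> circ_adj (fst u) (Nkn p (fst u) n) (snd u) (snd v)"

definition consec :: "nat set \<Rightarrow> nat \<Rightarrow> nat \<Rightarrow> bool" where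
  "consec D k l \<longleftrightarrow> k \<in> D \<and> l \<in> D \<and> k < l \<and> (\<forall>m\<in>D. \<not> (k < m \<and> m < l))"

definition bridge :: "(nat \<Rightarrow> real) \<Rightarrow> (nat \<Rightarrow> nat) \<Rightarrow> (nat \<Rightarrow> nat \<Rightarrow> nat) \<Rightarrow> (nat \<Rightarrow> nat \<Rightarrow> nat)
    \<Rightarrow> nat \<Rightarrow> nat \<times> nat \<Rightarrow> nat \<times> nat \<Rightarrow> bool" where
  "bridge p M a b n u v \<longleftrightarrow> consec (Dset p M n) (fst u) (fst v) \<and>
     snd u = a n (fst u) \<and> snd v = b n (fst u)"

definition tG_adj :: "(nat \<Rightarrow> real) \<Rightarrow> (nat \<Rightarrow> nat) \<Rightarrow> (nat \<Rightarrow> nat \<Rightarrow> nat) \<Rightarrow> (nat \<Rightarrow> nat \<Rightarrow> nat)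
    \<Rightarrow> nat \<Rightarrow> nat \<times> nat \<Rightarrow> nat \<times> nat \<Rightarrow> bool" where
  "tG_adj p M a b n u v \<longleftrightarrow> G_adj p M n u v \<or> bridge p M a b n u v \<or> bridge p M a b n v u"

definition degree :: "'a set \<Rightarrow> ('a \<Rightarrow> 'a \<Rightarrow> bool) \<Rightarrow> 'a \<Rightarrow> nat" where
  "degree V adj v = card {u \<in> V. adj v u}"

definition is_pagerank :: "'a set \<Rightarrow> ('a \<Rightarrow> 'a \<Rightarrow> bool) \<Rightarrow> real \<Rightarrow> ('a \<Rightarrow> real) \<Rightarrow> bool" where
  "is_pagerank V adj c R \<longleftrightarrow> (\<forall>v. v \<notin> V \<longrightarrow> R v = 0) \<and>
     (\<forall>j\<in>V. R j = c * (\<Sum>i\<in>V. R i * (if adj i j then 1 else 0) / real (degree V adj i)) + (1 - c))"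

definition pagerank :: "'a set \<Rightarrow> ('a \<Rightarrow> 'a \<Rightarrow> bool) \<Rightarrow> real \<Rightarrow> 'a \<Rightarrow> real" where
  "pagerank V adj c = (THE R. is_pagerank V adj c R)"

definition unif_prob :: "'a set \<Rightarrow> ('a \<Rightarrow> bool) \<Rightarrow> real" where
  "unif_prob V P = real (card {v \<in> V. P v}) / real (card V)"

end

theory Submission
  imports Defs
begin


definition Pm :: "'a set \<Rightarrow> ('a \<Rightarrow> 'a \<Rightarrow> bool) \<Rightarrow> 'a \<Rightarrow> 'a \<Rightarrow> real" where
  "Pm V adj i j = (if adj i j then 1 else 0) / real (degree V adj i)"

lemma Pm_nonneg: "Pm V adj i j \<ge> 0"
  unfolding Pm_def by simp

lemma Pm_rowsum:
  assumes "finite V"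
  shows "(\<Sum>j\<in>V. Pm V adj i j) \<le> 1"
proof -
  have "(\<Sum>j\<in>V. Pm V adj i j) = (\<Sum>j\<in>V. (if adj i j then 1 else 0)) / real (degree V adj i)"
    unfolding Pm_def by (simp add: sum_divide_distrib)
  also have "(\<Sum>j\<in>V. (if adj i j then 1 else 0::real)) = real (degree V adj i)"
    unfolding degree_def using assms by (simp add: sum.If_cases Int_def)
  finally show ?thesis by simp
qed

lemma contract:
  assumes "finite V"
  shows "(\<Sum>j\<in>V. \<bar>\<Sum>i\<in>V. D i * Pm V adj i j\<bar>) \<le> (\<Sum>i\<in>V. \<bar>D i\<bar>)"
proof -
  have "(\<Sum>j\<in>V. \<bar>\<Sum>i\<in>V. D i * Pm V adj i j\<bar>) \<le> (\<Sum>j\<in>V. \<Sum>i\<in>V. \<bar>D i\<bar> * Pm V adj i j)"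
    by (intro sum_mono order.trans[OF sum_abs]) (simp add: abs_mult Pm_nonneg)
  also have "\<dots> = (\<Sum>i\<in>V. \<bar>D i\<bar> * (\<Sum>j\<in>V. Pm V adj i j))"
    by (subst sum.swap) (simp add: sum_distrib_left)
  also have "\<dots> \<le> (\<Sum>i\<in>V. \<bar>D i\<bar>)"
    by (intro sum_mono) (simp add: Pm_rowsum[OF assms] mult_left_le)
  finally show ?thesis .
qed

lemma is_pagerank_Pm: "is_pagerank V adj c R \<longleftrightarrow> (\<forall>v. v \<notin> V \<longrightarrow> R v = 0) \<and>
     (\<forall>j\<in>V. R j = c * (\<Sum>i\<in>V. R i * Pm V adj i j) + (1 - c))"
  unfolding is_pagerank_def Pm_def by simp

definition Fop where
  "Fop V adj c R = (\<lambda>j. if j \<in> V then c * (\<Sum>i\<in>V. R i * Pm V adj i j) + (1 - c) else 0)"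

lemma Fop_diff:
  assumes "finite V" "0 \<le> c"
  shows "(\<Sum>j\<in>V. \<bar>Fop V adj c R1 j - Fop V adj c R2 j\<bar>) \<le> c * (\<Sum>i\<in>V. \<bar>R1 i - R2 i\<bar>)"
proof -
  have "(\<Sum>j\<in>V. \<bar>Fop V adj c R1 j - Fop V adj c R2 j\<bar>)
      = (\<Sum>j\<in>V. c * \<bar>\<Sum>i\<in>V. (R1 i - R2 i) * Pm V adj i j\<bar>)"
  proof (intro sum.cong refl)
    fix j assume j: "j \<in> V"
    have s: "(\<Sum>i\<in>V. (R1 i - R2 i) * Pm V adj i j) = (\<Sum>i\<in>V. R1 i * Pm V adj i j) - (\<Sum>i\<in>V. R2 i * Pm V adj i j)"
      by (simp add: left_diff_distrib sum_subtractf)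
    have "Fop V adj c R1 j - Fop V adj c R2 j = c * (\<Sum>i\<in>V. R1 i * Pm V adj i j) - c * (\<Sum>i\<in>V. R2 i * Pm V adj i j)"
      using j by (simp add: Fop_def)
    also have "\<dots> = c * (\<Sum>i\<in>V. (R1 i - R2 i) * Pm V adj i j)"
      unfolding s by (simp add: right_diff_distrib)
    finally show "\<bar>Fop V adj c R1 j - Fop V adj c R2 j\<bar> = c * \<bar>\<Sum>i\<in>V. (R1 i - R2 i) * Pm V adj i j\<bar>"
      using assms(2) by (simp add: abs_mult)
  qed
  also have "\<dots> = c * (\<Sum>j\<in>V. \<bar>\<Sum>i\<in>V. (R1 i - R2 i) * Pm V adj i j\<bar>)"
    by (simp add: sum_distrib_left)
  also have "\<dots> \<le> c * (\<Sum>i\<in>V. \<bar>R1 i - R2 i\<bar>)"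
    by (intro mult_left_mono contract assms)
  finally show ?thesis .
qed

lemma pagerank_exists:
  assumes "finite V" "0 \<le> c" "c < 1"
  shows "\<exists>R. is_pagerank V adj c R"
proof -
  define F where "F = Fop V adj c"
  define X where "X m = (F ^^ m) (\<lambda>_. 0)" for m
  have XS: "X (Suc m) = F (X m)" for m by (simp add: X_def)
  have Xout: "X m j = 0" if "j \<notin> V" for m j
    using that by (cases m) (auto simp: X_def F_def Fop_def)
  define \<delta> where "\<delta> m = (\<Sum>j\<in>V. \<bar>X (Suc m) j - X m j\<bar>)" for m
  have \<delta>: "\<delta> m \<le> c ^ m * \<delta> 0" for m
  proof (induction m)
    case 0 then show ?case by simp
  next
    case (Suc m)
    have "\<delta> (Suc m) \<le> c * \<delta> m"
      unfolding \<delta>_def XS[of "Suc m"] XS[of m] F_def by (rule Fop_diff[OF assms(1,2)])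
    also have "\<dots> \<le> c * (c ^ m * \<delta> 0)" using Suc assms(2) by (rule mult_left_mono)
    finally show ?case by simp
  qed
  have pt: "\<bar>X (Suc m) j - X m j\<bar> \<le> \<delta> 0 * c ^ m" for m j
  proof (cases "j \<in> V")
    case True
    then have "\<bar>X (Suc m) j - X m j\<bar> \<le> \<delta> m"
      unfolding \<delta>_def by (intro member_le_sum assms) auto
    then show ?thesis using \<delta>[of m] by (simp add: mult.commute)
  next
    case False
    then show ?thesis using Xout assms by (simp add: \<delta>_def sum_nonneg)
  qed
  have conv: "convergent (\<lambda>m. X m j)" for j
  proof -
    have sg: "summable (\<lambda>m. \<delta> 0 * c ^ m)"
      using assms by (intro summable_mult summable_geometric) auto
    have "summable (\<lambda>m. X (Suc m) j - X m j)"
      by (rule summable_comparison_test[OF _ sg]) (use pt in auto)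
    then have "(\<lambda>n. \<Sum>m<n. X (Suc m) j - X m j) \<longlonglongrightarrow> suminf (\<lambda>m. X (Suc m) j - X m j)"
      by (rule summable_LIMSEQ)
    then have "(\<lambda>n. X n j - X 0 j) \<longlonglongrightarrow> suminf (\<lambda>m. X (Suc m) j - X m j)"
      by (simp add: sum_lessThan_telescope[where f="\<lambda>m. X m j"])
    then have "(\<lambda>n. X n j - X 0 j + X 0 j) \<longlonglongrightarrow> suminf (\<lambda>m. X (Suc m) j - X m j) + X 0 j"
      by (intro tendsto_add tendsto_const)
    then show ?thesis unfolding convergent_def by auto
  qed
  define L where "L j = lim (\<lambda>m. X m j)" for j
  have XL: "(\<lambda>m. X m j) \<longlonglongrightarrow> L j" for j
    unfolding L_def using conv convergent_LIMSEQ_iff by blast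
  have fixL: "L j = F L j" for j
  proof -
    have "(\<lambda>m. X (Suc m) j) \<longlonglongrightarrow> L j" using XL by (rule LIMSEQ_Suc)
    moreover have "(\<lambda>m. X (Suc m) j) \<longlonglongrightarrow> F L j"
      unfolding XS F_def Fop_def
      by (cases "j \<in> V") (simp_all, intro tendsto_intros XL)
    ultimately show ?thesis by (rule LIMSEQ_unique)
  qed
  have "is_pagerank V adj c L"
    unfolding is_pagerank_Pm
  proof (intro conjI allI impI ballI)
    fix v assume v: "v \<notin> V"
    have "F L v = 0" unfolding F_def Fop_def using v by (rule if_not_P)
    then show "L v = 0" using fixL[of v] by (rule trans[rotated])
  next
    fix j assume "j \<in> V" then show "L j = c * (\<Sum>i\<in>V. L i * Pm V adj i j) + (1 - c)"
    proof -
      have "F L j = c * (\<Sum>i\<in>V. L i * Pm V adj i j) + (1 - c)"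
        unfolding F_def Fop_def using \<open>j \<in> V\<close> by (rule if_P)
      then show ?thesis using fixL[of j] by (rule trans[rotated])
    qed
  qed
  then show ?thesis by blast
qed

lemma Fop_fix:
  assumes h: "is_pagerank V adj c R"
  shows "Fop V adj c R = R"
proof (rule ext)
  fix j
  show "Fop V adj c R j = R j"
  proof (cases "j \<in> V")
    case True
    have "Fop V adj c R j = c * (\<Sum>i\<in>V. R i * Pm V adj i j) + (1 - c)"
      unfolding Fop_def using True by (rule if_P)
    also have "\<dots> = R j"
    proof -
      have hh: "\<forall>j\<in>V. R j = c * (\<Sum>i\<in>V. R i * Pm V adj i j) + (1 - c)"
        using h unfolding is_pagerank_Pm by (rule conjunct2)
      show ?thesis by (rule sym[OF bspec[OF hh True]])
    qed
    finally show ?thesis .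
  next
    case False
    have "Fop V adj c R j = 0"
      unfolding Fop_def using False by (rule if_not_P)
    also have "\<dots> = R j"
    proof -
      have hh: "\<forall>v. v \<notin> V \<longrightarrow> R v = 0"
        using h unfolding is_pagerank_Pm by (rule conjunct1)
      show ?thesis using hh False by simp
    qed
    finally show ?thesis .
  qed
qed

lemma pagerank_unique:
  assumes "finite V" "0 \<le> c" "c < 1" "is_pagerank V adj c R1" "is_pagerank V adj c R2"
  shows "R1 = R2"
proof -
  have e1: "Fop V adj c R1 = R1" and e2: "Fop V adj c R2 = R2"
    using assms(4,5) by (auto intro: Fop_fix)
  define X where "X = (\<Sum>j\<in>V. \<bar>R1 j - R2 j\<bar>)"
  have "X \<le> c * X"
    using Fop_diff[OF assms(1,2), of adj R1 R2] unfolding e1 e2 X_def .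
  moreover have X0: "0 \<le> X" unfolding X_def by (simp add: sum_nonneg)
  ultimately have "(1 - c) * X \<le> 0" by (simp add: left_diff_distrib)
  then have "X \<le> 0" using assms(3) by (simp add: mult_le_0_iff)
  then have "X = 0" using X0 by simp
  then have "\<forall>j\<in>V. \<bar>R1 j - R2 j\<bar> = 0"
    using assms(1) unfolding X_def by (simp add: sum_nonneg_eq_0_iff)
  moreover have "\<forall>j. j \<notin> V \<longrightarrow> R1 j = R2 j" using assms(4,5) unfolding is_pagerank_Pm by auto
  ultimately show ?thesis by (auto simp: fun_eq_iff)
qed

lemma pagerank_eq:
  assumes "finite V" "0 \<le> c" "c < 1"
  shows "is_pagerank V adj c (pagerank V adj c)"
proof -
  obtain R where R: "is_pagerank V adj c R" using pagerank_exists[OF assms, of adj] by blast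
  have "pagerank V adj c = R" unfolding pagerank_def
    by (rule the_equality[where P="is_pagerank V adj c", OF R]) (rule pagerank_unique[OF assms _ R])
  then show ?thesis using R by simp
qed

lemma degree_cong:
  assumes "\<forall>j. adj i j = adj' i j"
  shows "degree V adj i = degree V adj' i"
  using assms unfolding degree_def by simp

lemma pagerank_bound:
  assumes fin: "finite V" and c: "0 \<le> c" "c < 1" and R: "is_pagerank V adj c R"
    and col: "\<forall>j\<in>V. (\<Sum>i\<in>V. Pm V adj' i j) = 1"
    and B: "B \<subseteq> V"
    and agree: "\<forall>i\<in>V. i \<notin> B \<longrightarrow> (\<forall>j. adj i j = adj' i j)"
  shows "(\<Sum>v\<in>V. \<bar>R v - 1\<bar>) \<le> 2 * c / (1 - c) * real (card B)"
proof -
  define D where "D v = R v - 1" for v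
  have Req: "\<forall>j\<in>V. R j = c * (\<Sum>i\<in>V. R i * Pm V adj i j) + (1 - c)"
    using R unfolding is_pagerank_Pm by blast
  have Dj: "D j = c * (\<Sum>i\<in>V. D i * Pm V adj i j) + c * (\<Sum>i\<in>V. Pm V adj i j - Pm V adj' i j)"
    if "j \<in> V" for j
  proof -
    have "D j = c * (\<Sum>i\<in>V. R i * Pm V adj i j) - c * (\<Sum>i\<in>V. Pm V adj' i j)"
    proof -
      have eR: "R j = c * (\<Sum>i\<in>V. R i * Pm V adj i j) + (1 - c)" using Req that by blast
      have eT: "(\<Sum>i\<in>V. Pm V adj' i j) = 1" using col that by blast
      show ?thesis unfolding D_def eT by (subst eR) simp
    qed
    also have "\<dots> = c * (\<Sum>i\<in>V. D i * Pm V adj i j) + c * (\<Sum>i\<in>V. Pm V adj i j - Pm V adj' i j)"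
      unfolding D_def by (simp add: sum_subtractf left_diff_distrib algebra_simps)
    finally show ?thesis .
  qed
  define E where "E = (\<Sum>j\<in>V. \<bar>\<Sum>i\<in>V. Pm V adj i j - Pm V adj' i j\<bar>)"
  have "(\<Sum>j\<in>V. \<bar>D j\<bar>) \<le> (\<Sum>j\<in>V. c * \<bar>\<Sum>i\<in>V. D i * Pm V adj i j\<bar> + c * \<bar>\<Sum>i\<in>V. Pm V adj i j - Pm V adj' i j\<bar>)"
  proof (intro sum_mono)
    fix j assume j: "j \<in> V"
    have "\<bar>D j\<bar> = \<bar>c * (\<Sum>i\<in>V. D i * Pm V adj i j) + c * (\<Sum>i\<in>V. Pm V adj i j - Pm V adj' i j)\<bar>"
      by (subst Dj[OF j]) (rule refl)
    also have "\<dots> \<le> \<bar>c * (\<Sum>i\<in>V. D i * Pm V adj i j)\<bar> + \<bar>c * (\<Sum>i\<in>V. Pm V adj i j - Pm V adj' i j)\<bar>"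
      by (rule abs_triangle_ineq)
    also have "\<dots> = c * \<bar>\<Sum>i\<in>V. D i * Pm V adj i j\<bar> + c * \<bar>\<Sum>i\<in>V. Pm V adj i j - Pm V adj' i j\<bar>"
      using c by (simp add: abs_mult)
    finally show "\<bar>D j\<bar> \<le> c * \<bar>\<Sum>i\<in>V. D i * Pm V adj i j\<bar> + c * \<bar>\<Sum>i\<in>V. Pm V adj i j - Pm V adj' i j\<bar>" .
  qed
  also have "\<dots> = c * (\<Sum>j\<in>V. \<bar>\<Sum>i\<in>V. D i * Pm V adj i j\<bar>) + c * E"
    unfolding E_def by (simp add: sum.distrib sum_distrib_left)
  also have "\<dots> \<le> c * (\<Sum>j\<in>V. \<bar>D j\<bar>) + c * E"
    using contract[OF fin, of D adj] c by (simp add: mult_left_mono)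
  finally have main: "(1 - c) * (\<Sum>j\<in>V. \<bar>D j\<bar>) \<le> c * E" by (simp add: algebra_simps)
  have "E \<le> (\<Sum>j\<in>V. \<Sum>i\<in>V. \<bar>Pm V adj i j - Pm V adj' i j\<bar>)"
    unfolding E_def by (intro sum_mono sum_abs)
  also have "\<dots> = (\<Sum>i\<in>V. \<Sum>j\<in>V. \<bar>Pm V adj i j - Pm V adj' i j\<bar>)"
    by (rule sum.swap)
  also have "\<dots> = (\<Sum>i\<in>B. \<Sum>j\<in>V. \<bar>Pm V adj i j - Pm V adj' i j\<bar>)"
  proof (rule sum.mono_neutral_right[OF fin B], intro ballI)
    fix i assume i: "i \<in> V - B"
    then have ag: "\<forall>j. adj i j = adj' i j" using agree by blast
    then have "Pm V adj i j = Pm V adj' i j" for j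
      unfolding Pm_def using degree_cong[of adj i adj' V] ag by simp
    then show "(\<Sum>j\<in>V. \<bar>Pm V adj i j - Pm V adj' i j\<bar>) = 0" by simp
  qed
  also have "\<dots> \<le> (\<Sum>i\<in>B. 2)"
  proof (intro sum_mono)
    fix i assume "i \<in> B"
    have "(\<Sum>j\<in>V. \<bar>Pm V adj i j - Pm V adj' i j\<bar>) \<le> (\<Sum>j\<in>V. Pm V adj i j + Pm V adj' i j)"
      by (intro sum_mono) (simp add: Pm_nonneg abs_le_iff add_increasing add_increasing2)
    also have "\<dots> \<le> 2" using Pm_rowsum[OF fin, of adj i] Pm_rowsum[OF fin, of adj' i]
      by (simp add: sum.distrib)
    finally show "(\<Sum>j\<in>V. \<bar>Pm V adj i j - Pm V adj' i j\<bar>) \<le> 2" .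
  qed
  finally have EB: "E \<le> 2 * real (card B)" by simp
  have "c * E \<le> c * (2 * real (card B))" using EB c(1) by (rule mult_left_mono)
  then have m2: "(1 - c) * (\<Sum>j\<in>V. \<bar>D j\<bar>) \<le> c * (2 * real (card B))"
    using main by linarith
  have pos: "0 < 1 - c" using c by simp
  have "(\<Sum>j\<in>V. \<bar>D j\<bar>) \<le> c * (2 * real (card B)) / (1 - c)"
    using m2 pos by (simp add: pos_le_divide_eq mult.commute)
  also have "\<dots> = 2 * c / (1 - c) * real (card B)" by simp
  finally show ?thesis unfolding D_def .
qed

lemma markov_card:
  assumes "finite V" "\<epsilon> > 0"
  shows "real (card {v\<in>V. \<bar>f v\<bar> > \<epsilon>}) * \<epsilon> \<le> (\<Sum>v\<in>V. \<bar>f v\<bar>)"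
proof -
  have "real (card {v\<in>V. \<bar>f v\<bar> > \<epsilon>}) * \<epsilon> = (\<Sum>v\<in>{v\<in>V. \<bar>f v\<bar> > \<epsilon>}. \<epsilon>)" by simp
  also have "\<dots> \<le> (\<Sum>v\<in>{v\<in>V. \<bar>f v\<bar> > \<epsilon>}. \<bar>f v\<bar>)" by (intro sum_mono) auto
  also have "\<dots> \<le> (\<Sum>v\<in>V. \<bar>f v\<bar>)" using assms(1) by (intro sum_mono2) auto
  finally show ?thesis .
qed




lemma circ_sym:
  assumes "circ_adj k N i j" shows "circ_adj k N j i"
proof -
  define d where "d = (int i - int j) mod int N"
  have ij: "i < N" "j < N" "i \<noteq> j" using assms by (auto simp: circ_adj_def)
  have N: "int N > 0" using ij by simp
  have d0: "d \<noteq> 0"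
  proof
    assume "d = 0"
    then have "int i mod int N = int j mod int N" unfolding d_def by (simp add: mod_eq_dvd_iff mod_eq_0_iff_dvd)
    then show False using ij by simp
  qed
  have e: "(int j - int i) mod int N = int N - d"
    using zmod_zminus1_eq_if[of "int i - int j" "int N"] d0 unfolding d_def by simp
  have "(1 \<le> d \<and> d \<le> int (k div 2)) \<or> (int N - int (k div 2) \<le> d \<and> d \<le> int N - 1)"
    using assms unfolding circ_adj_def d_def Let_def by blast
  then show ?thesis using ij e unfolding circ_adj_def Let_def by auto
qed

lemma circ_card:
  assumes "k + 1 \<le> N" "i < N"
  shows "card {j. circ_adj k N i j} = 2 * (k div 2)"
proof -
  define h where "h = k div 2"
  have hN: "2 * h < N" using assms unfolding h_def by linarith
  define g where "g j = nat ((int i - int j) mod int N)" for j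
  have gd: "int (g j) = (int i - int j) mod int N" for j
    using assms unfolding g_def by simp
  have glt: "g j < N" for j
    using assms unfolding g_def by (subst nat_less_iff) auto
  define A where "A = {1..h} \<union> {N-h..<N}"
  have set_eq: "{j. circ_adj k N i j} = {j\<in>{..<N}. g j \<in> A}"
  proof (intro set_eqI iffI)
    fix j assume "j \<in> {j. circ_adj k N i j}"
    then have j: "j < N" and c: "(1 \<le> int (g j) \<and> int (g j) \<le> int h) \<or> (int N - int h \<le> int (g j) \<and> int (g j) \<le> int N - 1)"
      unfolding circ_adj_def Let_def gd[symmetric] h_def by auto
    then show "j \<in> {j\<in>{..<N}. g j \<in> A}" unfolding A_def using hN by auto
  next
    fix j assume "j \<in> {j\<in>{..<N}. g j \<in> A}"
    then have j: "j < N" and gA: "g j \<in> A" by auto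
    have "g j \<noteq> 0" using gA hN unfolding A_def by auto
    then have "i \<noteq> j" unfolding g_def by auto
    moreover have "(1 \<le> int (g j) \<and> int (g j) \<le> int h) \<or> (int N - int h \<le> int (g j) \<and> int (g j) \<le> int N - 1)"
      using gA hN unfolding A_def by auto
    ultimately show "j \<in> {j. circ_adj k N i j}"
      unfolding circ_adj_def Let_def gd[symmetric] h_def using j assms by auto
  qed
  have inj: "inj_on g {..<N}"
  proof (rule inj_onI)
    fix x y assume xy: "x \<in> {..<N}" "y \<in> {..<N}" "g x = g y"
    then have "(int i - int x) mod int N = (int i - int y) mod int N" using gd by metis
    then have "(int x) mod int N = (int y) mod int N"
      by (metis add_diff_cancel_left' diff_diff_eq2 mod_diff_right_eq)
    then show "x = y" using xy by simp
  qed
  have img: "g ` {..<N} = {..<N}"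
    using inj glt by (intro card_subset_eq) (auto simp: card_image)
  have "card {j\<in>{..<N}. g j \<in> A} = card (g ` {j\<in>{..<N}. g j \<in> A})"
    using inj by (intro card_image[symmetric]) (auto intro: inj_on_subset)
  also have "g ` {j\<in>{..<N}. g j \<in> A} = A"
  proof -
    have sub: "A \<subseteq> {..<N}" unfolding A_def using hN by auto
    have "g ` {j\<in>{..<N}. g j \<in> A} = g ` {..<N} \<inter> A" by auto
    then show ?thesis using img sub by (simp add: Int_absorb1)
  qed
  also have "card A = h + h"
    unfolding A_def using hN by (subst card_Un_disjoint) auto
  finally show ?thesis using set_eq h_def by simp
qed




lemma finite_Dset: "finite (Dset p M n)"
  by (rule finite_subset[of _ "{1..M n}"]) (auto simp: Dset_def)

lemma Vset_Sigma: "Vset p M n = Sigma (Dset p M n) (\<lambda>k. {..<Nkn p k n})"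
  unfolding Vset_def by auto

lemma finite_Vset: "finite (Vset p M n)"
  unfolding Vset_Sigma using finite_Dset by auto

lemma card_Vset: "card (Vset p M n) = (\<Sum>k\<in>Dset p M n. Nkn p k n)"
  unfolding Vset_Sigma using finite_Dset by (simp add: card_SigmaI)

lemma G_deg:
  assumes M_slow: "\<And>n k. k \<in> Dset p M n \<Longrightarrow> k + 1 \<le> Nkn p k n"
    and v: "v \<in> Vset p M n"
  shows "degree (Vset p M n) (G_adj p M n) v = fst v"
proof -
  obtain k i where v': "v = (k, i)" by (cases v)
  have kD: "k \<in> Dset p M n" and i: "i < Nkn p k n" using v v' by (auto simp: Vset_def)
  have ev: "even k" using kD by (auto simp: Dset_def)
  have "{u \<in> Vset p M n. G_adj p M n v u} = Pair k ` {j. circ_adj k (Nkn p k n) i j}"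
    using v unfolding v' G_adj_def Vset_def circ_adj_def by auto
  then have "degree (Vset p M n) (G_adj p M n) v = card {j. circ_adj k (Nkn p k n) i j}"
    unfolding degree_def by (simp add: card_image inj_on_def)
  also have "\<dots> = 2 * (k div 2)" using M_slow[OF kD] i by (rule circ_card)
  also have "\<dots> = k" using ev by simp
  finally show ?thesis using v' by simp
qed

lemma G_sym: "G_adj p M n u v \<Longrightarrow> G_adj p M n v u"
  unfolding G_adj_def using circ_sym by metis

lemma G_pos: "v \<in> Vset p M n \<Longrightarrow> fst v \<ge> 2"
  by (auto simp: Vset_def Dset_def)

lemma G_col:
  assumes M_slow: "\<And>n k. k \<in> Dset p M n \<Longrightarrow> k + 1 \<le> Nkn p k n"
  shows "\<forall>j\<in>Vset p M n. (\<Sum>i\<in>Vset p M n. Pm (Vset p M n) (G_adj p M n) i j) = 1"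
proof
  fix j assume j: "j \<in> Vset p M n"
  let ?V = "Vset p M n"
  have "(\<Sum>i\<in>?V. Pm ?V (G_adj p M n) i j) = (\<Sum>i\<in>?V. (if G_adj p M n j i then 1 else 0) / real (fst j))"
  proof (intro sum.cong refl)
    fix i assume i: "i \<in> ?V"
    show "Pm ?V (G_adj p M n) i j = (if G_adj p M n j i then 1 else 0) / real (fst j)"
    proof (cases "G_adj p M n i j")
      case True
      then have "fst i = fst j" by (simp add: G_adj_def)
      then show ?thesis using True G_sym[OF True] G_deg[OF M_slow i] unfolding Pm_def by simp
    next
      case False
      then have "\<not> G_adj p M n j i" using G_sym by blast
      then show ?thesis using False unfolding Pm_def by simp
    qed
  qed
  also have "\<dots> = real (degree ?V (G_adj p M n) j) / real (fst j)"
    unfolding degree_def using finite_Vset[of p M n]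
    by (simp add: sum_divide_distrib[symmetric] sum.If_cases Int_def)
  also have "\<dots> = 1" using G_deg[OF M_slow j] G_pos[OF j] by simp
  finally show "(\<Sum>i\<in>?V. Pm ?V (G_adj p M n) i j) = 1" .
qed

definition Bset where
  "Bset p M a b n = {v \<in> Vset p M n. \<exists>u. bridge p M a b n v u \<or> bridge p M a b n u v}"

lemma Bset_sub: "Bset p M a b n \<subseteq> Vset p M n" unfolding Bset_def by auto

lemma tG_agree:
  "\<forall>i\<in>Vset p M n. i \<notin> Bset p M a b n \<longrightarrow> (\<forall>j. tG_adj p M a b n i j = G_adj p M n i j)"
  unfolding Bset_def tG_adj_def by auto

lemma tG_deg:
  assumes M_slow: "\<And>n k. k \<in> Dset p M n \<Longrightarrow> k + 1 \<le> Nkn p k n"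
    and v: "v \<in> Vset p M n" "v \<notin> Bset p M a b n"
  shows "degree (Vset p M n) (tG_adj p M a b n) v = fst v"
proof -
  have "\<forall>j. tG_adj p M a b n v j = G_adj p M n v j" using tG_agree v by blast
  then have "degree (Vset p M n) (tG_adj p M a b n) v = degree (Vset p M n) (G_adj p M n) v"
    by (rule degree_cong)
  then show ?thesis using G_deg[OF M_slow v(1)] by simp
qed

lemma card_Bset: "card (Bset p M a b n) \<le> 2 * card (Dset p M n)"
proof -
  let ?D = "Dset p M n"
  define C where "C = {(k, l). consec ?D k l}"
  have C_sub: "C \<subseteq> ?D \<times> ?D" unfolding C_def consec_def by auto
  have injC: "inj_on fst C"
  proof (rule inj_onI)
    fix x y assume xy: "x \<in> C" "y \<in> C" "fst x = fst y"
    obtain k l where x: "x = (k, l)" by (cases x)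
    obtain k' l' where y: "y = (k', l')" by (cases y)
    have c1: "consec ?D k l" and c2: "consec ?D k l'" using xy x y C_def by auto
    have "l = l'"
    proof (rule ccontr)
      assume "l \<noteq> l'"
      then have "l < l' \<or> l' < l" by auto
      then show False using c1 c2 unfolding consec_def by blast
    qed
    then show "x = y" using x y xy by simp
  qed
  have finC: "finite C" using C_sub finite_Dset by (meson finite_SigmaI finite_subset)
  have cardC: "card C \<le> card ?D"
  proof -
    have "card C = card (fst ` C)" using injC by (simp add: card_image)
    also have "\<dots> \<le> card ?D" using C_sub finite_Dset by (intro card_mono) auto
    finally show ?thesis .
  qed
  have "Bset p M a b n \<subseteq> (\<lambda>k. (k, a n k)) ` ?D \<union> (\<lambda>(k, l). (l, b n k)) ` C"
  proof
    fix v assume "v \<in> Bset p M a b n"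
    then obtain u where "bridge p M a b n v u \<or> bridge p M a b n u v" unfolding Bset_def by auto
    then show "v \<in> (\<lambda>k. (k, a n k)) ` ?D \<union> (\<lambda>(k, l). (l, b n k)) ` C"
    proof
      assume "bridge p M a b n v u"
      then have "fst v \<in> ?D" "v = (fst v, a n (fst v))" unfolding bridge_def consec_def
        by (auto simp: prod_eq_iff)
      then show ?thesis by blast
    next
      assume h: "bridge p M a b n u v"
      then have "(fst u, fst v) \<in> C" "v = (fst v, b n (fst u))" unfolding bridge_def C_def
        by (auto simp: prod_eq_iff)
      then show ?thesis by force
    qed
  qed
  then have "card (Bset p M a b n) \<le> card ((\<lambda>k. (k, a n k)) ` ?D \<union> (\<lambda>(k, l). (l, b n k)) ` C)"
    using finite_Dset finC by (intro card_mono) auto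
  also have "\<dots> \<le> card ((\<lambda>k. (k, a n k)) ` ?D) + card ((\<lambda>(k, l). (l, b n k)) ` C)"
    by (rule card_Un_le)
  also have "\<dots> \<le> card ?D + card C"
    by (intro add_mono card_image_le) (use finite_Dset finC in auto)
  finally show ?thesis using cardC by simp
qed

lemma sum_distinct_nat:
  "finite A \<Longrightarrow> card A * (card A + 1) \<le> 2 * (\<Sum>k\<in>A. (k + 1::nat))"
proof (induction "card A" arbitrary: A)
  case 0 then show ?case by simp
next
  case (Suc m)
  then have ne: "A \<noteq> {}" by auto
  define x where "x = Max A"
  have xA: "x \<in> A" using Suc.prems ne unfolding x_def by simp
  have "A \<subseteq> {..x}" using Suc.prems unfolding x_def by auto
  then have "card A \<le> x + 1" using card_mono[of "{..x}" A] by simp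
  have cA': "card (A - {x}) = m" using Suc.hyps(2) xA Suc.prems by simp
  have IH: "m * (m + 1) \<le> 2 * (\<Sum>k\<in>A - {x}. (k + 1))"
    using Suc.hyps(1)[of "A - {x}"] cA' Suc.prems by simp
  have "(\<Sum>k\<in>A. (k + 1)) = (x + 1) + (\<Sum>k\<in>A - {x}. (k + 1))"
    using Suc.prems xA by (simp add: sum.remove)
  then show ?case using IH \<open>card A \<le> x + 1\<close> Suc.hyps(2)[symmetric]
    by (simp add: algebra_simps)
qed

lemma card_D_sq:
  assumes M_slow: "\<And>n k. k \<in> Dset p M n \<Longrightarrow> k + 1 \<le> Nkn p k n"
  shows "card (Dset p M n) * card (Dset p M n) \<le> 2 * card (Vset p M n)"
proof -
  have "card (Dset p M n) * card (Dset p M n) \<le> card (Dset p M n) * (card (Dset p M n) + 1)" by simp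
  also have "\<dots> \<le> 2 * (\<Sum>k\<in>Dset p M n. (k + 1))" by (rule sum_distinct_nat[OF finite_Dset])
  also have "\<dots> \<le> 2 * (\<Sum>k\<in>Dset p M n. Nkn p k n)" using M_slow by (simp add: sum_mono)
  finally show ?thesis by (simp add: card_Vset)
qed




lemma card_le_plus_B:
  assumes "finite V" "\<forall>v\<in>V - B. P v \<longrightarrow> Q v" "finite B"
  shows "real (card {v\<in>V. P v}) \<le> real (card {v\<in>V. Q v}) + real (card B)"
proof -
  have "{v\<in>V. P v} \<subseteq> {v\<in>V. Q v} \<union> B" using assms by auto
  then have "card {v\<in>V. P v} \<le> card ({v\<in>V. Q v} \<union> B)"
    using assms by (intro card_mono) auto
  also have "\<dots> \<le> card {v\<in>V. Q v} + card B" by (rule card_Un_le)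
  finally show ?thesis by linarith
qed

locale setting =
  fixes p :: "nat \<Rightarrow> real" and M :: "nat \<Rightarrow> nat"
  assumes p_nonneg: "\<And>k. p k \<ge> 0"
    and p_sums: "p sums 1"
    and p_zero: "p 0 = 0"
    and p_odd: "\<And>k. odd k \<Longrightarrow> p k = 0"
    and M_div: "filterlim M at_top sequentially"
    and M_slow: "\<And>n k. k \<in> Dset p M n \<Longrightarrow> k + 1 \<le> Nkn p k n"
begin

definition \<sigma> where "\<sigma> n = (\<Sum>k\<in>Dset p M n. p k)"
definition S where "S n = real (card (Vset p M n))"
definition m where "m n = real (card (Dset p M n))"

lemma \<sigma>_eq: "\<sigma> n = (\<Sum>k<M n + 1. p k)"
  unfolding \<sigma>_def
proof (rule sum.mono_neutral_left)
  show "Dset p M n \<subseteq> {..<M n + 1}" by (auto simp: Dset_def)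
  show "\<forall>i\<in>{..<M n + 1} - Dset p M n. p i = 0"
  proof
    fix i assume "i \<in> {..<M n + 1} - Dset p M n"
    then have "\<not> (even i \<and> 1 \<le> i \<and> p i > 0)" by (auto simp: Dset_def)
    then show "p i = 0" using p_odd p_zero p_nonneg[of i] by (cases "i = 0") auto
  qed
qed auto

lemma \<sigma>_lim: "\<sigma> \<longlonglongrightarrow> 1"
proof -
  have "(\<lambda>N. \<Sum>k<N. p k) \<longlonglongrightarrow> 1" using p_sums by (simp add: sums_def)
  moreover have "filterlim (\<lambda>n. M n + 1) at_top sequentially"
    by (rule filterlim_at_top_mono[OF M_div]) auto
  ultimately have "(\<lambda>n. \<Sum>k<M n + 1. p k) \<longlonglongrightarrow> 1" by (rule filterlim_compose)
  then show ?thesis unfolding \<sigma>_eq .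
qed

lemma \<sigma>_le: "\<sigma> n \<le> 1"
proof -
  have "\<sigma> n \<le> suminf p" unfolding \<sigma>_eq
    using p_sums p_nonneg by (intro sum_le_suminf) (auto simp: sums_iff)
  then show ?thesis using p_sums by (simp add: sums_iff)
qed

lemma Nkn_bounds: "real (Nkn p k n) \<le> real n * p k" "real n * p k - 1 < real (Nkn p k n)"
proof -
  have nn: "real n * p k \<ge> 0" using p_nonneg by simp
  then have e: "real (Nkn p k n) = of_int \<lfloor>real n * p k\<rfloor>" unfolding Nkn_def by simp
  show "real (Nkn p k n) \<le> real n * p k" unfolding e by simp
  show "real n * p k - 1 < real (Nkn p k n)" unfolding e by linarith
qed

lemma S_eq: "S n = (\<Sum>k\<in>Dset p M n. real (Nkn p k n))"
  unfolding S_def card_Vset by simp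

lemma S_le: "S n \<le> real n"
proof -
  have "S n \<le> (\<Sum>k\<in>Dset p M n. real n * p k)" unfolding S_eq by (intro sum_mono Nkn_bounds)
  also have "\<dots> = real n * \<sigma> n" unfolding \<sigma>_def by (simp add: sum_distrib_left)
  also have "\<dots> \<le> real n" using \<sigma>_le by (simp add: mult_left_le)
  finally show ?thesis .
qed

lemma S_ge: "S n \<ge> real n * \<sigma> n - m n"
proof -
  have "real n * \<sigma> n - m n = (\<Sum>k\<in>Dset p M n. real n * p k - 1)"
    unfolding \<sigma>_def m_def by (simp add: sum_distrib_left sum_subtractf)
  also have "\<dots> \<le> S n" unfolding S_eq by (intro sum_mono less_imp_le Nkn_bounds)
  finally show ?thesis .
qed

lemma m_sq: "m n * m n \<le> 2 * real n"
proof -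
  have "m n * m n \<le> 2 * S n" unfolding m_def S_def
    using card_D_sq[OF M_slow, where n=n] by (metis of_nat_le_iff of_nat_mult of_nat_numeral)
  then show ?thesis using S_le[of n] by linarith
qed

lemma m_over_n: "(\<lambda>n. m n / real n) \<longlonglongrightarrow> 0"
proof (rule tendsto_sandwich[where f="\<lambda>_. 0" and h="\<lambda>n. sqrt (2 / real n)"])
  show "\<forall>\<^sub>F n in sequentially. 0 \<le> m n / real n" by (simp add: m_def)
  show "\<forall>\<^sub>F n in sequentially. m n / real n \<le> sqrt (2 / real n)"
  proof (rule eventually_sequentiallyI[of 1])
    fix n :: nat assume n: "1 \<le> n"
    have "(m n / real n)^2 = m n * m n / (real n * real n)" by (simp add: power2_eq_square)
    also have "\<dots> \<le> 2 * real n / (real n * real n)"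
      using m_sq[of n] n by (intro divide_right_mono) auto
    also have "\<dots> = 2 / real n" using n by simp
    finally have "(m n / real n)^2 \<le> 2 / real n" .
    then have "sqrt ((m n / real n)^2) \<le> sqrt (2 / real n)" by (rule real_sqrt_le_mono)
    then show "m n / real n \<le> sqrt (2 / real n)" by (simp add: m_def)
  qed
  show "(\<lambda>n. sqrt (2 / real n)) \<longlonglongrightarrow> 0"
    using tendsto_real_sqrt[OF lim_const_over_n[of "2::real"]] by simp
qed auto

lemma S_over_n: "(\<lambda>n. S n / real n) \<longlonglongrightarrow> 1"
proof (rule tendsto_sandwich[where f="\<lambda>n. \<sigma> n - m n / real n" and h="\<lambda>_. 1"])
  show "\<forall>\<^sub>F n in sequentially. \<sigma> n - m n / real n \<le> S n / real n"
  proof (rule eventually_sequentiallyI[of 1])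
    fix n :: nat assume n: "1 \<le> n"
    have "\<sigma> n - m n / real n = (real n * \<sigma> n - m n) / real n" using n by (simp add: field_simps)
    also have "\<dots> \<le> S n / real n" using S_ge[of n] by (intro divide_right_mono) auto
    finally show "\<sigma> n - m n / real n \<le> S n / real n" .
  qed
  show "\<forall>\<^sub>F n in sequentially. S n / real n \<le> 1"
  proof (intro always_eventually allI)
    fix n show "S n / real n \<le> 1"
      using S_le[of n] by (cases "n = 0") (auto simp: divide_le_eq_1 S_def)
  qed
  show "(\<lambda>n. \<sigma> n - m n / real n) \<longlonglongrightarrow> 1"
    using tendsto_diff[OF \<sigma>_lim m_over_n] by simp
qed auto

lemma S_pos: "eventually (\<lambda>n. S n > 0) sequentially"
proof -
  have "eventually (\<lambda>n. S n / real n > 0) sequentially"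
    using S_over_n by (rule order_tendstoD) simp
  then show ?thesis
    by eventually_elim (auto simp: S_def zero_less_divide_iff)
qed

lemma m_over_S: "(\<lambda>n. m n / S n) \<longlonglongrightarrow> 0"
proof -
  have "(\<lambda>n. (m n / real n) / (S n / real n)) \<longlonglongrightarrow> 0 / 1"
    by (intro tendsto_divide m_over_n S_over_n) auto
  moreover have "eventually (\<lambda>n. (m n / real n) / (S n / real n) = m n / S n) sequentially"
  proof (rule eventually_sequentiallyI[of 1])
    fix n :: nat assume n: "1 \<le> n"
    show "(m n / real n) / (S n / real n) = m n / S n"
      using n by (cases "S n = 0") (simp_all add: field_simps)
  qed
  ultimately show ?thesis by (simp add: Lim_transform_eventually)
qed

end




context setting begin

lemma Y_eq: "card {v\<in>Vset p M n. fst v = k} = (if k \<in> Dset p M n then Nkn p k n else 0)"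
proof (cases "k \<in> Dset p M n")
  case True
  then have "{v\<in>Vset p M n. fst v = k} = Pair k ` {..<Nkn p k n}" by (auto simp: Vset_def)
  then show ?thesis using True by (simp add: card_image inj_on_def)
next
  case False
  then have e: "{v\<in>Vset p M n. fst v = k} = {}" by (auto simp: Vset_def)
  show ?thesis unfolding e using False by simp
qed

lemma Y_lim: "(\<lambda>n. real (card {v\<in>Vset p M n. fst v = k}) / S n) \<longlonglongrightarrow> p k"
proof (cases "even k \<and> 1 \<le> k \<and> p k > 0")
  case True
  have ev: "eventually (\<lambda>n. k \<le> M n) sequentially" using M_div by (simp add: filterlim_at_top)
  have N_lim: "(\<lambda>n. real (Nkn p k n) / real n) \<longlonglongrightarrow> p k"
  proof (rule tendsto_sandwich[where f="\<lambda>n. p k - 1 / real n" and h="\<lambda>_. p k"])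
    show "\<forall>\<^sub>F n in sequentially. p k - 1 / real n \<le> real (Nkn p k n) / real n"
    proof (rule eventually_sequentiallyI[of 1])
      fix n :: nat assume n: "1 \<le> n"
      have "p k - 1 / real n = (real n * p k - 1) / real n" using n by (simp add: field_simps)
      also have "\<dots> \<le> real (Nkn p k n) / real n"
        using Nkn_bounds(2)[of n k] by (intro divide_right_mono) auto
      finally show "p k - 1 / real n \<le> real (Nkn p k n) / real n" .
    qed
    show "\<forall>\<^sub>F n in sequentially. real (Nkn p k n) / real n \<le> p k"
    proof (rule eventually_sequentiallyI[of 1])
      fix n :: nat assume n: "1 \<le> n"
      have "real (Nkn p k n) / real n \<le> (real n * p k) / real n"
        using Nkn_bounds(1)[of k n] by (intro divide_right_mono) auto
      also have "\<dots> = p k" using n by simp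
      finally show "real (Nkn p k n) / real n \<le> p k" .
    qed
    show "(\<lambda>n. p k - 1 / real n) \<longlonglongrightarrow> p k"
      using tendsto_diff[OF tendsto_const lim_const_over_n[of 1]] by simp
  qed auto
  have "(\<lambda>n. (real (Nkn p k n) / real n) / (S n / real n)) \<longlonglongrightarrow> p k / 1"
    by (intro tendsto_divide N_lim S_over_n) auto
  then have "(\<lambda>n. (real (Nkn p k n) / real n) / (S n / real n)) \<longlonglongrightarrow> p k" by simp
  moreover have "eventually (\<lambda>n. (real (Nkn p k n) / real n) / (S n / real n)
      = real (card {v\<in>Vset p M n. fst v = k}) / S n) sequentially"
    using ev eventually_ge_at_top[of 1]
  proof eventually_elim
    case (elim n)
    then have "k \<in> Dset p M n" using True by (auto simp: Dset_def)
    then show ?case using elim by (simp add: Y_eq)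
  qed
  ultimately show ?thesis by (rule Lim_transform_eventually)
next
  case False
  then have pk: "p k = 0" using p_odd p_zero p_nonneg[of k] by (cases "k = 0") auto
  have "k \<notin> Dset p M n" for n using False by (auto simp: Dset_def)
  then show ?thesis using pk by (simp add: Y_eq)
qed

lemma part_a: "(\<lambda>n. unif_prob (Vset p M n)
              (\<lambda>v. degree (Vset p M n) (tG_adj p M a b n) v = k)) \<longlonglongrightarrow> p k"
proof -
  define X where "X n = real (card {v\<in>Vset p M n. degree (Vset p M n) (tG_adj p M a b n) v = k})" for n
  define Y where "Y n = real (card {v\<in>Vset p M n. fst v = k})" for n
  have finB: "finite (Bset p M a b n)" for n
    using finite_Vset Bset_sub by (rule finite_subset[rotated])
  have XY: "\<bar>X n - Y n\<bar> \<le> 2 * m n" for n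
  proof -
    have agree: "\<forall>v\<in>Vset p M n - Bset p M a b n. degree (Vset p M n) (tG_adj p M a b n) v = fst v"
      using tG_deg[OF M_slow] by blast
    have "X n \<le> Y n + real (card (Bset p M a b n))" unfolding X_def Y_def
      by (rule card_le_plus_B[OF finite_Vset _ finB]) (use agree in auto)
    moreover have "Y n \<le> X n + real (card (Bset p M a b n))" unfolding X_def Y_def
      by (rule card_le_plus_B[OF finite_Vset _ finB]) (use agree in auto)
    moreover have "real (card (Bset p M a b n)) \<le> 2 * m n"
      unfolding m_def using card_Bset[of p M a b n] by linarith
    ultimately show ?thesis by linarith
  qed
  have "(\<lambda>n. X n / S n - Y n / S n) \<longlonglongrightarrow> 0"
  proof (rule Lim_null_comparison)
    show "\<forall>\<^sub>F n in sequentially. norm (X n / S n - Y n / S n) \<le> 2 * (m n / S n)"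
      using S_pos
    proof eventually_elim
      case (elim n)
      have "norm (X n / S n - Y n / S n) = \<bar>X n - Y n\<bar> / S n"
        using elim by (simp add: diff_divide_distrib[symmetric])
      also have "\<dots> \<le> 2 * m n / S n" using XY[of n] elim by (intro divide_right_mono) auto
      finally show ?case by simp
    qed
    show "(\<lambda>n. 2 * (m n / S n)) \<longlonglongrightarrow> 0"
      using tendsto_mult[OF tendsto_const m_over_S, of 2] by simp
  qed
  moreover have Yl: "(\<lambda>n. Y n / S n) \<longlonglongrightarrow> p k" unfolding Y_def by (rule Y_lim)
  ultimately have "(\<lambda>n. (X n / S n - Y n / S n) + Y n / S n) \<longlonglongrightarrow> 0 + p k"
    by (rule tendsto_add)
  then have "(\<lambda>n. X n / S n) \<longlonglongrightarrow> p k" by simp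
  then show ?thesis unfolding unif_prob_def X_def S_def .
qed

end




lemma card_tail:
  fixes d :: "'a \<Rightarrow> nat" and x :: real
  assumes finV: "finite V" and finF: "finite F" and F: "F = {k. real k \<le> x}"
  shows "real (card {v\<in>V. real (d v) > x}) = real (card V) - (\<Sum>k\<in>F. real (card {v\<in>V. d v = k}))"
proof -
  have u: "{v\<in>V. real (d v) > x} \<union> {v\<in>V. d v \<in> F} = V" using F by auto
  have "card {v\<in>V. real (d v) > x} + card {v\<in>V. d v \<in> F}
        = card ({v\<in>V. real (d v) > x} \<union> {v\<in>V. d v \<in> F})"
    using finV F by (intro card_Un_disjoint[symmetric]) auto
  also have "\<dots> = card V" unfolding u ..
  finally have A1: "card {v\<in>V. real (d v) > x} + card {v\<in>V. d v \<in> F} = card V" .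
  have A2: "card {v\<in>V. d v \<in> F} = (\<Sum>k\<in>F. card {v\<in>V. d v = k})"
  proof -
    have "{v\<in>V. d v \<in> F} = (\<Union>k\<in>F. {v\<in>V. d v = k})" by auto
    also have "card \<dots> = (\<Sum>k\<in>F. card {v\<in>V. d v = k})"
      using finF finV by (intro card_UN_disjoint) auto
    finally show ?thesis .
  qed
  have e0: "card {v\<in>V. real (d v) > x} + (\<Sum>k\<in>F. card {v\<in>V. d v = k}) = card V"
    using A1 unfolding A2 .
  have e1: "real (card {v\<in>V. real (d v) > x}) + real (\<Sum>k\<in>F. card {v\<in>V. d v = k}) = real (card V)"
    using arg_cong[OF e0, of real] by (simp only: of_nat_add)
  have e2: "real (\<Sum>k\<in>F. card {v\<in>V. d v = k}) = (\<Sum>k\<in>F. real (card {v\<in>V. d v = k}))"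
    by (rule of_nat_sum)
  have "real (card {v\<in>V. real (d v) > x}) = real (card V) - real (\<Sum>k\<in>F. card {v\<in>V. d v = k})"
    by (rule eq_diff_eq[THEN iffD2, OF e1])
  then show ?thesis unfolding e2 .
qed

context setting begin

lemma part_tail: "(\<lambda>n. unif_prob (Vset p M n)
              (\<lambda>v. real (degree (Vset p M n) (tG_adj p M a b n) v) > x))
            \<longlonglongrightarrow> (\<Sum>k. if real k > x then p k else 0)"
proof -
  define F where "F = {k::nat. real k \<le> x}"
  have finF: "finite F"
  proof (rule finite_subset[of _ "{..nat \<lceil>x\<rceil>}"])
    show "F \<subseteq> {..nat \<lceil>x\<rceil>}"
    proof
      fix k assume "k \<in> F"
      then have "real k \<le> x" by (simp add: F_def)
      then have "int k \<le> \<lceil>x\<rceil>" by linarith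
      then show "k \<in> {..nat \<lceil>x\<rceil>}" by simp
    qed
  qed simp
  let ?d = "\<lambda>n v. degree (Vset p M n) (tG_adj p M a b n) v"
  have key: "unif_prob (Vset p M n) (\<lambda>v. real (?d n v) > x)
      = 1 - (\<Sum>k\<in>F. unif_prob (Vset p M n) (\<lambda>v. ?d n v = k))" if Sp: "S n > 0" for n
  proof -
    let ?V = "Vset p M n"
    have "real (card {v\<in>?V. real (?d n v) > x}) = S n - (\<Sum>k\<in>F. real (card {v\<in>?V. ?d n v = k}))"
      unfolding S_def by (rule card_tail[OF finite_Vset finF F_def])
    then show ?thesis using Sp unfolding unif_prob_def S_def[symmetric]
      by (simp add: diff_divide_distrib sum_divide_distrib)
  qed
  have lim: "(\<lambda>n. 1 - (\<Sum>k\<in>F. unif_prob (Vset p M n) (\<lambda>v. ?d n v = k))) \<longlonglongrightarrow> 1 - (\<Sum>k\<in>F. p k)"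
    by (intro tendsto_diff tendsto_const tendsto_sum part_a)
  have "(\<lambda>k. p k - (if k \<in> F then p k else 0)) sums (1 - (\<Sum>k\<in>F. p k))"
    by (intro sums_diff p_sums sums_If_finite_set finF)
  moreover have "(\<lambda>k. p k - (if k \<in> F then p k else 0)) = (\<lambda>k. if real k > x then p k else 0)"
    by (auto simp: F_def fun_eq_iff)
  ultimately have rhs: "(\<Sum>k. if real k > x then p k else 0) = 1 - (\<Sum>k\<in>F. p k)"
    by (simp add: sums_iff)
  have "eventually (\<lambda>n. 1 - (\<Sum>k\<in>F. unif_prob (Vset p M n) (\<lambda>v. ?d n v = k))
     = unif_prob (Vset p M n) (\<lambda>v. real (?d n v) > x)) sequentially"
    using S_pos by eventually_elim (simp add: key)
  from Lim_transform_eventually[OF lim this] show ?thesis unfolding rhs .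
qed

lemma part_c:
  assumes c: "0 < c" "c < 1" and eps: "\<epsilon> > 0"
  shows "(\<lambda>n. unif_prob (Vset p M n)
              (\<lambda>v. \<bar>pagerank (Vset p M n) (tG_adj p M a b n) c v - 1\<bar> > \<epsilon>)) \<longlonglongrightarrow> 0"
proof (rule Lim_null_comparison)
  define K where "K = 4 * c / ((1 - c) * \<epsilon>)"
  show "(\<lambda>n. K * (m n / S n)) \<longlonglongrightarrow> 0"
    using tendsto_mult[OF tendsto_const m_over_S, of K] by simp
  show "\<forall>\<^sub>F n in sequentially. norm (unif_prob (Vset p M n)
              (\<lambda>v. \<bar>pagerank (Vset p M n) (tG_adj p M a b n) c v - 1\<bar> > \<epsilon>)) \<le> K * (m n / S n)"
    using S_pos
  proof eventually_elim
    case (elim n)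
    let ?V = "Vset p M n"
    let ?R = "pagerank ?V (tG_adj p M a b n) c"
    have R: "is_pagerank ?V (tG_adj p M a b n) c ?R"
      using c by (intro pagerank_eq finite_Vset) auto
    have b1: "(\<Sum>v\<in>?V. \<bar>?R v - 1\<bar>) \<le> 2 * c / (1 - c) * real (card (Bset p M a b n))"
      using c by (intro pagerank_bound[OF finite_Vset _ _ R G_col[OF M_slow] Bset_sub tG_agree]) auto
    have b2: "real (card (Bset p M a b n)) \<le> 2 * m n"
      unfolding m_def using card_Bset[of p M a b n] by linarith
    have "real (card {v\<in>?V. \<bar>?R v - 1\<bar> > \<epsilon>}) * \<epsilon> \<le> (\<Sum>v\<in>?V. \<bar>?R v - 1\<bar>)"
      using eps by (intro markov_card finite_Vset)
    also have "\<dots> \<le> 2 * c / (1 - c) * (2 * m n)"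
      using c by (intro order.trans[OF b1] mult_left_mono b2) auto
    finally have f1: "real (card {v\<in>?V. \<bar>?R v - 1\<bar> > \<epsilon>}) * \<epsilon> \<le> 2 * c / (1 - c) * (2 * m n)" .
    have "real (card {v\<in>?V. \<bar>?R v - 1\<bar> > \<epsilon>}) \<le> (2 * c / (1 - c) * (2 * m n)) / \<epsilon>"
      by (subst pos_le_divide_eq[OF eps]) (rule f1)
    also have "\<dots> = K * m n" unfolding K_def using c eps by (simp add: field_simps)
    finally have "real (card {v\<in>?V. \<bar>?R v - 1\<bar> > \<epsilon>}) \<le> K * m n" .
    then have "real (card {v\<in>?V. \<bar>?R v - 1\<bar> > \<epsilon>}) / S n \<le> K * m n / S n"
      using elim by (intro divide_right_mono) auto
    then show ?case using elim unfolding unif_prob_def S_def[symmetric] by simp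
  qed
qed

end

theorem mainTheorem12:
  fixes p :: "nat \<Rightarrow> real" and c :: real and M :: "nat \<Rightarrow> nat"
    and a b :: "nat \<Rightarrow> nat \<Rightarrow> nat"
  assumes p_nonneg: "\<And>k. p k \<ge> 0"
    and p_sums: "p sums 1"
    and p_zero: "p 0 = 0"
    and p_odd: "\<And>k. odd k \<Longrightarrow> p k = 0"
    and c: "0 < c" "c < 1"
    and M_div: "filterlim M at_top sequentially"
    and M_slow: "\<And>n k. k \<in> Dset p M n \<Longrightarrow> k + 1 \<le> Nkn p k n"
    and ab: "\<And>n k l. consec (Dset p M n) k l \<Longrightarrow> a n k < Nkn p k n \<and> b n k < Nkn p l n"
  shows "(\<forall>k. (\<lambda>n. unif_prob (Vset p M n)
              (\<lambda>v. degree (Vset p M n) (tG_adj p M a b n) v = k)) \<longlonglongrightarrow> p k)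
       \<and> (\<forall>x::real. (\<lambda>n. unif_prob (Vset p M n)
              (\<lambda>v. real (degree (Vset p M n) (tG_adj p M a b n) v) > x))
            \<longlonglongrightarrow> (\<Sum>k. if real k > x then p k else 0))
       \<and> (\<forall>\<epsilon>>0. (\<lambda>n. unif_prob (Vset p M n)
              (\<lambda>v. \<bar>pagerank (Vset p M n) (tG_adj p M a b n) c v - 1\<bar> > \<epsilon>)) \<longlonglongrightarrow> 0)"
proof -
  interpret setting p M
    using assms by unfold_locales auto
  show ?thesis
  proof (intro conjI allI impI)
    fix k show "(\<lambda>n. unif_prob (Vset p M n)
              (\<lambda>v. degree (Vset p M n) (tG_adj p M a b n) v = k)) \<longlonglongrightarrow> p k"
      by (rule part_a)
  next
    fix x :: real show "(\<lambda>n. unif_prob (Vset p M n)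
              (\<lambda>v. real (degree (Vset p M n) (tG_adj p M a b n) v) > x))
            \<longlonglongrightarrow> (\<Sum>k. if real k > x then p k else 0)"
      by (rule part_tail)
  next
    fix \<epsilon> :: real assume "\<epsilon> > 0" then show "(\<lambda>n. unif_prob (Vset p M n)
              (\<lambda>v. \<bar>pagerank (Vset p M n) (tG_adj p M a b n) c v - 1\<bar> > \<epsilon>)) \<longlonglongrightarrow> 0"
      by (rule part_c[OF c])
  qed
qed


end
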